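(* $\mathfrak{b}_{\mathrm{game}^*}^{\mathrm{II}} = \mathfrak{c}$. That is, if $\mathcal{A}\subseteq\omega^\omega$ and Player II has a winning strategy in the bounding* game with respect to $\mathcal{A}$, then $|\mathcal{A}|=\mathfrak{c}$ (and such $\mathcal{A}$ of size $\mathfrak{c}$ exist).
   Context: For $\mathcal{A}\subseteq\omega^\omega$, the bounding* game with respect to $\mathcal{A}$ is the infinite two-player game in which, at round $k$, Player I plays $n_k\in\omega$ and then Player II plays $m_k\in\omega$. Player II wins iff $\langle m_k:k\in\omega\rangle\in\mathcal{A}$ and $n_k<m_k$ for infinitely many $k$. $\mathfrak{b}_{\mathrm{game}^*}^{\mathrm{II}}$ is the least $|\mathcal{A}|$ such that Player II has a winning strategy in the bounding* game with respect to $\mathcal{A}$. $\mathfrak{c}=2^{\aleph_0}$. *)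

theory Defs
  imports Main "HOL-Library.Equipollence"
begin

text \<open>A strategy for Player II maps the finite list of Player I's moves so far
  [n_0, ..., n_k] to II's answer m_k (II's own earlier moves are determined by the
  strategy, so this is no loss of generality).\<close>

definition play_II :: "(nat list \<Rightarrow> nat) \<Rightarrow> (nat \<Rightarrow> nat) \<Rightarrow> (nat \<Rightarrow> nat)" where
  "play_II \<sigma> x = (\<lambda>k. \<sigma> (map x [0..<Suc k]))"

definition II_wins_play :: "(nat \<Rightarrow> nat) set \<Rightarrow> (nat \<Rightarrow> nat) \<Rightarrow> (nat \<Rightarrow> nat) \<Rightarrow> bool" where
  "II_wins_play A x m \<longleftrightarrow> m \<in> A \<and> infinite {k. x k < m k}"

definition II_winning_strategy :: "(nat \<Rightarrow> nat) set \<Rightarrow> (nat list \<Rightarrow> nat) \<Rightarrow> bool" where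
  "II_winning_strategy A \<sigma> \<longleftrightarrow> (\<forall>x. II_wins_play A x (play_II \<sigma> x))"

definition II_has_winning_strategy :: "(nat \<Rightarrow> nat) set \<Rightarrow> bool" where
  "II_has_winning_strategy A \<longleftrightarrow> (\<exists>\<sigma>. II_winning_strategy A \<sigma>)"

end

theory Submission
  imports Defs
begin

definition okp :: "(nat list \<Rightarrow> nat) \<Rightarrow> nat list \<Rightarrow> nat list \<times> nat list \<Rightarrow> bool" where
  "okp \<sigma> h p \<longleftrightarrow> length (fst p) = length (snd p) \<and> fst p \<noteq> [] \<and> \<sigma> (h @ fst p) \<noteq> \<sigma> (h @ snd p)"

definition sp :: "(nat list \<Rightarrow> nat) \<Rightarrow> nat list \<Rightarrow> nat list \<times> nat list" where
  "sp \<sigma> h = (SOME p. okp \<sigma> h p)"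

fun PP :: "(nat list \<Rightarrow> nat) \<Rightarrow> (nat \<Rightarrow> bool) \<Rightarrow> nat \<Rightarrow> nat list" where
  "PP \<sigma> f 0 = []"
| "PP \<sigma> f (Suc n) = PP \<sigma> f n @ (if f n then fst (sp \<sigma> (PP \<sigma> f n)) else snd (sp \<sigma> (PP \<sigma> f n)))"

definition XX :: "(nat list \<Rightarrow> nat) \<Rightarrow> (nat \<Rightarrow> bool) \<Rightarrow> nat \<Rightarrow> nat" where
  "XX \<sigma> f k = PP \<sigma> f (Suc k) ! k"

lemma split_exists:
  assumes W: "II_winning_strategy A \<sigma>"
  shows "\<exists>p. okp \<sigma> h p"
proof (rule ccontr)
  assume "\<not> (\<exists>p. okp \<sigma> h p)"
  hence C: "\<And>t1 t2. length t1 = length t2 \<Longrightarrow> t1 \<noteq> [] \<Longrightarrow> \<sigma> (h @ t1) = \<sigma> (h @ t2)"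
    unfolding okp_def by fastforce
  define v where "v L = \<sigma> (h @ replicate L 0)" for L
  define x where "x j = (if j < length h then h ! j else v (Suc j - length h))" for j
  have mh: "map x [0..<length h] = h"
    by (rule nth_equalityI) (auto simp: x_def)
  have key: "play_II \<sigma> x j = x j" if "j \<ge> length h" for j
  proof -
    have "[0..<Suc j] = [0..<length h] @ [length h..<Suc j]"
      using that by (metis le_SucI upt_add_eq_append zero_le le_add_diff_inverse)
    hence "map x [0..<Suc j] = h @ map x [length h..<Suc j]" using mh by simp
    moreover have "\<sigma> (h @ map x [length h..<Suc j]) = \<sigma> (h @ replicate (Suc j - length h) 0)"
      by (rule C) (use that in auto)
    ultimately show ?thesis using that by (simp add: play_II_def x_def v_def)
  qed
  have "{k. x k < play_II \<sigma> x k} \<subseteq> {..<length h}"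
    using key by (auto simp: not_less) (metis less_irrefl not_less key)
  hence "finite {k. x k < play_II \<sigma> x k}" using finite_subset by blast
  with W show False unfolding II_winning_strategy_def II_wins_play_def by blast
qed

context
  fixes A \<sigma>
  assumes W: "II_winning_strategy A \<sigma>"
begin

lemma sp_ok: "okp \<sigma> h (sp \<sigma> h)"
  unfolding sp_def using split_exists[OF W] by (rule someI_ex)

lemma PP_len: "length (PP \<sigma> f n) \<ge> n"
proof (induction n)
  case (Suc n)
  have "length (fst (sp \<sigma> (PP \<sigma> f n))) > 0 \<and> length (snd (sp \<sigma> (PP \<sigma> f n))) > 0"
    using sp_ok[of "PP \<sigma> f n"] unfolding okp_def by (metis length_greater_0_conv)
  then show ?case using Suc by (cases "f n") (auto simp del: length_greater_0_conv)
qed simp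

lemma PP_prefix: "m \<le> n \<Longrightarrow> \<exists>t. PP \<sigma> f n = PP \<sigma> f m @ t"
proof (induction n)
  case (Suc n)
  show ?case
  proof (cases "m = Suc n")
    case False
    with Suc obtain t where "PP \<sigma> f n = PP \<sigma> f m @ t" by auto
    then show ?thesis by simp
  qed simp
qed simp

lemma PP_nth: "k < length (PP \<sigma> f n) \<Longrightarrow> PP \<sigma> f n ! k = XX \<sigma> f k"
proof -
  assume k: "k < length (PP \<sigma> f n)"
  have k2: "k < length (PP \<sigma> f (Suc k))" using PP_len[where f=f and n="Suc k"] by simp
  show ?thesis
  proof (cases "n \<le> Suc k")
    case True
    then obtain t where "PP \<sigma> f (Suc k) = PP \<sigma> f n @ t" using PP_prefix by blast
    then show ?thesis using k by (simp add: XX_def nth_append del: PP.simps)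
  next
    case False
    then obtain t where "PP \<sigma> f n = PP \<sigma> f (Suc k) @ t" using PP_prefix[where m="Suc k" and n=n and f=f] by auto
    then show ?thesis using k2 by (simp add: XX_def nth_append del: PP.simps)
  qed
qed

lemma PP_map: "map (XX \<sigma> f) [0..<length (PP \<sigma> f n)] = PP \<sigma> f n"
  by (rule nth_equalityI) (auto simp: PP_nth)

lemma PP_eq: "(\<forall>j<n. f j = g j) \<Longrightarrow> PP \<sigma> f n = PP \<sigma> g n"
  by (induction n) auto

lemma play_inj: "inj (\<lambda>f. play_II \<sigma> (XX \<sigma> f))"
proof (rule injI, rule ccontr)
  fix f g assume E: "play_II \<sigma> (XX \<sigma> f) = play_II \<sigma> (XX \<sigma> g)" and ne: "f \<noteq> g"
  then obtain i0 where "f i0 \<noteq> g i0" by auto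
  define i where "i = (LEAST i. f i \<noteq> g i)"
  have fi: "f i \<noteq> g i" unfolding i_def by (rule LeastI) fact
  have lt: "\<forall>j<i. f j = g j" unfolding i_def using not_less_Least by blast
  define h where "h = PP \<sigma> f i"
  have hg: "PP \<sigma> g i = h" using PP_eq[OF lt] h_def by simp
  obtain t1 t2 where sp: "sp \<sigma> h = (t1, t2)" by fastforce
  have ok: "length t1 = length t2" "\<sigma> (h @ t1) \<noteq> \<sigma> (h @ t2)"
    using sp_ok[of h] sp unfolding okp_def by auto
  have pf: "PP \<sigma> f (Suc i) = h @ (if f i then t1 else t2)" using sp h_def by simp
  have pg: "PP \<sigma> g (Suc i) = h @ (if f i then t2 else t1)" using sp hg fi by auto
  define L where "L = length h + length t1"
  have Lpos: "L > 0" using PP_len[where f=f and n="Suc i"] pf ok(1) by (auto simp: L_def split: if_splits)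
  have lf: "length (PP \<sigma> f (Suc i)) = L" "length (PP \<sigma> g (Suc i)) = L"
    using pf pg ok(1) by (auto simp: L_def simp del: PP.simps)
  have SL: "Suc (L - 1) = L" using Lpos by simp
  have "play_II \<sigma> (XX \<sigma> f) (L - 1) = \<sigma> (PP \<sigma> f (Suc i))"
    unfolding play_II_def SL using PP_map[where f=f and n="Suc i"] lf by simp
  moreover have "play_II \<sigma> (XX \<sigma> g) (L - 1) = \<sigma> (PP \<sigma> g (Suc i))"
    unfolding play_II_def SL using PP_map[where f=g and n="Suc i"] lf by simp
  ultimately show False using E pf pg ok(2) by (auto split: if_splits)
qed

lemma lower: "(UNIV :: (nat \<Rightarrow> bool) set) \<lesssim> A"
proof -
  have "(\<lambda>f. play_II \<sigma> (XX \<sigma> f)) ` UNIV \<subseteq> A"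
    using W unfolding II_winning_strategy_def II_wins_play_def by auto
  then show ?thesis unfolding lepoll_def using play_inj by blast
qed

end

lemma pow_lepoll_bool: "Pow (UNIV :: nat set) \<lesssim> (UNIV :: (nat \<Rightarrow> bool) set)"
  unfolding lepoll_def
  by (rule exI[of _ "\<lambda>S n. n \<in> S"]) (auto simp: inj_on_def fun_eq_iff)

lemma fun_lepoll_pow: "(UNIV :: (nat \<Rightarrow> nat) set) \<lesssim> Pow (UNIV :: nat set)"
  unfolding lepoll_def
proof (rule exI[of _ "\<lambda>f. range (\<lambda>n. prod_encode (n, f n))"], intro conjI)
  show "inj_on (\<lambda>f. range (\<lambda>n. prod_encode (n, f n))) UNIV"
  proof (rule inj_onI, rule ext)
    fix f g n assume E: "range (\<lambda>n. prod_encode (n, f n)) = range (\<lambda>n. prod_encode (n, g n))"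
    have "prod_encode (n, f n) \<in> range (\<lambda>n. prod_encode (n, g n))" using E by blast
    then obtain m where "prod_encode (n, f n) = prod_encode (m, g m)" by auto
    then show "f n = g n" by (auto dest: inj_onD[OF inj_prod_encode])
  qed
qed auto

lemma card_lemma:
  assumes "II_has_winning_strategy A" shows "A \<approx> Pow (UNIV :: nat set)"
proof -
  obtain \<sigma> where W: "II_winning_strategy A \<sigma>" using assms II_has_winning_strategy_def by blast
  have "Pow (UNIV :: nat set) \<lesssim> A"
    using pow_lepoll_bool lower[OF W] lepoll_trans by blast
  moreover have "A \<lesssim> Pow (UNIV :: nat set)"
    using fun_lepoll_pow subset_imp_lepoll[of A UNIV] lepoll_trans by blast
  ultimately show ?thesis using lepoll_antisym by blast
qed

theorem mainTheorem3:
  shows "(\<forall>A :: (nat \<Rightarrow> nat) set. II_has_winning_strategy A \<longrightarrow> A \<approx> Pow (UNIV :: nat set))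
       \<and> (\<exists>A :: (nat \<Rightarrow> nat) set. II_has_winning_strategy A \<and> A \<approx> Pow (UNIV :: nat set))"
proof -
  have "II_has_winning_strategy (UNIV :: (nat \<Rightarrow> nat) set)"
    unfolding II_has_winning_strategy_def II_winning_strategy_def II_wins_play_def
    by (rule exI[of _ "\<lambda>l. Suc (last l)"]) (simp add: play_II_def)
  then show ?thesis using card_lemma by blast
qed

end
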